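(* Given $t,\Delta\in\mathbb{N}$ and a set $B\subseteq[t]$ (given as a sorted list), one can compute in time $O(|B|)$ a set $A$ such that $A$ sparsely $(t,\Delta)$-approximates $B$.
   Context: $\mathbb{N}=\{0,1,2,\dots\}$, $[t]=\{0,1,\dots,t\}$. For $A\subseteq[t]$ and $b\in\mathbb{N}$ define $\mathrm{apx}^-_t(b,A)=\max\{a\in A\cup\{t+1\}: a\le b\}$ and $\mathrm{apx}^+_t(b,A)=\min\{a\in A\cup\{t+1\}: a\ge b\}$, with $\max\emptyset=-\infty$, $\min\emptyset=\infty$. $A$ $(t,\Delta)$-approximates $B$ if $A\subseteq B\subseteq[t]$ and for every $b\in B$, $\mathrm{apx}^+_t(b,A)-\mathrm{apx}^-_t(b,A)\le\Delta$. A set $A\subseteq\mathbb{N}$ is $\Delta$-sparse if $|A\cap[x,x+\Delta]|\le 2$ for every $x\in\mathbb{N}$; $A$ sparsely $(t,\Delta)$-approximates $B$ if $A$ is $\Delta$-sparse and $(t,\Delta)$-approximates $B$. *)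

theory Defs
  imports Main "HOL-Library.Extended_Real"
begin

(* apx^-_t(b,A) and apx^+_t(b,A); max of empty set = -\<infinity>, min of empty set = \<infinity> *)
definition apx_minus :: "nat \<Rightarrow> nat \<Rightarrow> nat set \<Rightarrow> ereal" where
  "apx_minus t b A = Sup ((\<lambda>a. ereal (real a)) ` {a \<in> A \<union> {t+1}. a \<le> b})"

definition apx_plus :: "nat \<Rightarrow> nat \<Rightarrow> nat set \<Rightarrow> ereal" where
  "apx_plus t b A = Inf ((\<lambda>a. ereal (real a)) ` {a \<in> A \<union> {t+1}. a \<ge> b})"

definition approximates :: "nat \<Rightarrow> nat \<Rightarrow> nat set \<Rightarrow> nat set \<Rightarrow> bool" where
  "approximates t \<Delta> A B \<longleftrightarrow> A \<subseteq> B \<and> B \<subseteq> {0..t} \<and>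
     (\<forall>b\<in>B. apx_plus t b A - apx_minus t b A \<le> ereal (real \<Delta>))"

definition sparse :: "nat \<Rightarrow> nat set \<Rightarrow> bool" where
  "sparse \<Delta> A \<longleftrightarrow> (\<forall>x. card (A \<inter> {x..x+\<Delta>}) \<le> 2)"

definition sparsely_approximates :: "nat \<Rightarrow> nat \<Rightarrow> nat set \<Rightarrow> nat set \<Rightarrow> bool" where
  "sparsely_approximates t \<Delta> A B \<longleftrightarrow> sparse \<Delta> A \<and> approximates t \<Delta> A B"

(* The algorithm: a single greedy left-to-right scan over the sorted list B.
   The option argument is the last element put into A (None: nothing yet). *)
fun sparse_apx_scan :: "nat \<Rightarrow> nat \<Rightarrow> nat option \<Rightarrow> nat list \<Rightarrow> nat list" where
  "sparse_apx_scan t d l [] = []"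
| "sparse_apx_scan t d l [b] =
     (case l of None \<Rightarrow> [b]
      | Some a \<Rightarrow> (if d < t + 1 - a then [b] else []))"
| "sparse_apx_scan t d l (b # c # bs) =
     (case l of None \<Rightarrow> b # sparse_apx_scan t d (Some b) (c # bs)
      | Some a \<Rightarrow> (if d < c - a then b # sparse_apx_scan t d (Some b) (c # bs)
                   else sparse_apx_scan t d (Some a) (c # bs)))"

(* Running time: number of (recursive) calls of the scan, each doing O(1) work
   (one comparison and one cons), as in the Time_Functions cost model. *)
fun T_sparse_apx_scan :: "nat \<Rightarrow> nat \<Rightarrow> nat option \<Rightarrow> nat list \<Rightarrow> nat" where
  "T_sparse_apx_scan t d l [] = 1"
| "T_sparse_apx_scan t d l [b] = 1"
| "T_sparse_apx_scan t d l (b # c # bs) =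
     (case l of None \<Rightarrow> T_sparse_apx_scan t d (Some b) (c # bs) + 1
      | Some a \<Rightarrow> (if d < c - a then T_sparse_apx_scan t d (Some b) (c # bs) + 1
                   else T_sparse_apx_scan t d (Some a) (c # bs) + 1))"

definition sparse_apx :: "nat \<Rightarrow> nat \<Rightarrow> nat list \<Rightarrow> nat list" where
  "sparse_apx t d xs = sparse_apx_scan t d None xs"

definition T_sparse_apx :: "nat \<Rightarrow> nat \<Rightarrow> nat list \<Rightarrow> nat" where
  "T_sparse_apx t d xs = T_sparse_apx_scan t d None xs"

end

theory Submission
  imports Defs
begin

lemma scan_subset: "set (sparse_apx_scan t d l xs) \<subseteq> set xs"
  by (induction t d l xs rule: sparse_apx_scan.induct) (auto split: option.splits)

lemma scan_time: "T_sparse_apx_scan t d l xs \<le> length xs + 1"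
  by (induction t d l xs rule: T_sparse_apx_scan.induct) (auto split: option.splits)

lemma triv2: "S \<subseteq> {p,q::nat} \<Longrightarrow> \<forall>x\<in>S. \<forall>y\<in>S. \<forall>z\<in>S. x < y \<and> y < z \<longrightarrow> P x z"
proof (intro ballI impI)
  fix x y z assume "S \<subseteq> {p,q}" "x \<in> S" "y \<in> S" "z \<in> S" "x < y \<and> y < z"
  then have "x \<in> {p,q}" "y \<in> {p,q}" "z \<in> {p,q}" "x < y" "y < z" by auto
  then show "P x z" by auto
qed

lemma scan_sparse:
  "sorted_wrt (<) xs \<Longrightarrow> (\<forall>a\<in>set_option l. \<forall>x\<in>set xs. a < x) \<Longrightarrow>
   \<forall>x\<in>set_option l \<union> set (sparse_apx_scan t d l xs).
   \<forall>y\<in>set_option l \<union> set (sparse_apx_scan t d l xs).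
   \<forall>z\<in>set_option l \<union> set (sparse_apx_scan t d l xs).
     x < y \<and> y < z \<longrightarrow> d < z - x"
proof (induction t d l xs rule: sparse_apx_scan.induct)
  case (1 t d l)
  then show ?case by auto
next
  case (2 t d l b)
  have "set_option l \<union> set (sparse_apx_scan t d l [b]) \<subseteq> {b, case l of None \<Rightarrow> b | Some a \<Rightarrow> a}"
    by (cases l) auto
  then show ?case by (rule triv2)
next
  case (3 t d l b c bs)
  show ?case
  proof (cases l)
    case None
    have eq: "set_option l \<union> set (sparse_apx_scan t d l (b # c # bs)) = set_option (Some b) \<union> set (sparse_apx_scan t d (Some b) (c # bs))"
      using None by simp
    have p1: "sorted_wrt (<) (c # bs)" using 3(4) by simp
    have p2: "\<forall>a\<in>set_option (Some b). \<forall>x\<in>set (c # bs). a < x" using 3(4) by simp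
    show ?thesis unfolding eq by (rule 3(1)[OF None p1 p2])
  next
    case (Some a)
    show ?thesis
    proof (cases "d < c - a")
      case True
      let ?R = "sparse_apx_scan t d (Some b) (c # bs)"
      have IH: "\<forall>x\<in>insert b (set ?R). \<forall>y\<in>insert b (set ?R). \<forall>z\<in>insert b (set ?R).
           x < y \<and> y < z \<longrightarrow> d < z - x" using 3(2)[OF Some True] 3(4,5) by simp
      have sub: "set ?R \<subseteq> set (c#bs)" by (rule scan_subset)
      have cw: "\<And>w. w \<in> set ?R \<Longrightarrow> c \<le> w" using sub 3(4) by fastforce
      have ab: "a < b" "b < c" using 3(4,5) Some by auto
      have eq: "set_option l \<union> set (sparse_apx_scan t d l (b # c # bs)) = insert a (insert b (set ?R))"
        using Some True by (simp add: insert_commute)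
      show ?thesis unfolding eq
      proof (intro ballI impI)
        fix x y z assume xs: "x \<in> insert a (insert b (set ?R))" "y \<in> insert a (insert b (set ?R))"
          "z \<in> insert a (insert b (set ?R))" and o: "x < y \<and> y < z"
        show "d < z - x"
        proof (cases "x = a")
          case True
          have "z \<noteq> a" using o True by simp
          moreover have "z \<noteq> b"
          proof
            assume "z = b"
            then have "y \<in> set ?R" using xs o True by auto
            then show False using cw ab o \<open>z = b\<close> by fastforce
          qed
          ultimately have "c \<le> z" using xs cw by auto
          then show ?thesis using True \<open>d < c - a\<close> by linarith
        next
          case False
          have xb: "b \<le> x" using xs False cw ab by fastforce
          then have "y \<noteq> a" "z \<noteq> a" using o ab by auto
          then show ?thesis using IH xs o False by blast
        qed
      qed
    next
      case False
      then show ?thesis using 3(3)[OF Some False] Some 3(4,5) by simp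
    qed
  qed
qed


lemma scan_H:
  "(xs = [] \<longrightarrow> t + 1 \<le> a + d) \<Longrightarrow> (xs \<noteq> [] \<longrightarrow> hd xs \<le> a + d) \<Longrightarrow>
   \<exists>h\<in>insert (t+1) (set (sparse_apx_scan t d (Some a) xs)). h \<le> a + d"
proof (induction xs rule: induct_list012)
  case 1
  then show ?case by simp
next
  case (2 b)
  then show ?case by auto
next
  case (3 b c bs)
  show ?case
  proof (cases "d < c - a")
    case True
    then show ?thesis using 3(3,4) by simp
  next
    case False
    then have "c \<le> a + d" by simp
    then obtain h where "h\<in>insert (t+1) (set (sparse_apx_scan t d (Some a) (c # bs)))" "h \<le> a + d"
      using 3(2) by auto
    then show ?thesis using False by auto
  qed
qed

lemma scan_apx:
  "sorted_wrt (<) xs \<Longrightarrow> (\<forall>a\<in>set_option l. \<forall>x\<in>set xs. a < x) \<Longrightarrow> set xs \<subseteq> {..t} \<Longrightarrow>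
   \<forall>b\<in>set xs. \<exists>lo\<in>set_option l \<union> set (sparse_apx_scan t d l xs). lo \<le> b \<and>
      (\<exists>hi\<in>insert (t+1) (set (sparse_apx_scan t d l xs)). b \<le> hi \<and> hi \<le> lo + d)"
proof (induction t d l xs rule: sparse_apx_scan.induct)
  case (1 t d l)
  then show ?case by auto
next
  case (2 t d l b)
  then show ?case by (cases l) auto
next
  case (3 t d l b c bs)
  let ?R = "sparse_apx_scan t d (Some b) (c # bs)"
  let ?S = "sparse_apx_scan t d l (b # c # bs)"
  have p1: "sorted_wrt (<) (c # bs)" using 3(4) by simp
  have p2: "\<forall>a\<in>set_option (Some b). \<forall>x\<in>set (c # bs). a < x" using 3(4) by simp
  have p3: "set (c # bs) \<subseteq> {..t}" using 3(6) by simp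
  have incl: ?case if eqS: "?S = b # ?R" and IH: "\<forall>x\<in>set (c#bs). \<exists>lo\<in>set_option (Some b) \<union> set ?R. lo \<le> x \<and>
      (\<exists>hi\<in>insert (t+1) (set ?R). x \<le> hi \<and> hi \<le> lo + d)"
  proof
    fix x assume x: "x \<in> set (b # c # bs)"
    show "\<exists>lo\<in>set_option l \<union> set ?S. lo \<le> x \<and> (\<exists>hi\<in>insert (t+1) (set ?S). x \<le> hi \<and> hi \<le> lo + d)"
    proof (cases "x = b")
      case True
      then show ?thesis unfolding eqS by auto
    next
      case False
      then have "x \<in> set (c#bs)" using x by simp
      then obtain lo hi where "lo\<in>set_option (Some b) \<union> set ?R" "lo \<le> x" "hi\<in>insert (t+1) (set ?R)"
        "x \<le> hi" "hi \<le> lo + d" using IH by blast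
      then show ?thesis unfolding eqS by auto
    qed
  qed
  show ?case
  proof (cases l)
    case None
    show ?thesis by (rule incl) (use None 3(1)[OF None p1 p2 p3] in auto)
  next
    case (Some a)
    show ?thesis
    proof (cases "d < c - a")
      case True
      show ?thesis by (rule incl) (use Some True 3(2)[OF Some True p1 p2 p3] in auto)
    next
      case False
      have eqS: "?S = sparse_apx_scan t d (Some a) (c # bs)" using Some False by simp
      have q2: "\<forall>a'\<in>set_option (Some a). \<forall>x\<in>set (c # bs). a' < x" using 3(5) Some by simp
      have IH: "\<forall>x\<in>set (c#bs). \<exists>lo\<in>set_option l \<union> set ?S. lo \<le> x \<and>
        (\<exists>hi\<in>insert (t+1) (set ?S). x \<le> hi \<and> hi \<le> lo + d)"
        using 3(3)[OF Some False p1 q2 p3] Some eqS by simp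
      have "c \<le> a + d" using False by simp
      then obtain h where h: "h\<in>insert (t+1) (set ?S)" "h \<le> a + d"
        using scan_H[of "c#bs" t a d] eqS by auto
      have "b < h"
      proof -
        have "set ?S \<subseteq> set (c#bs)" unfolding eqS by (rule scan_subset)
        then show ?thesis using h(1) 3(4,6) by auto
      qed
      have "a \<le> b" using 3(5) Some by simp
      then have bcase: "\<exists>lo\<in>set_option l \<union> set ?S. lo \<le> b \<and>
        (\<exists>hi\<in>insert (t+1) (set ?S). b \<le> hi \<and> hi \<le> lo + d)"
        using h \<open>b < h\<close> Some by (intro bexI[of _ a]) auto
      show ?thesis using IH bcase by auto
    qed
  qed
qed


lemma triple_sparse:
  assumes "\<forall>x\<in>A. \<forall>y\<in>A. \<forall>z\<in>A. x < y \<and> y < z \<longrightarrow> d < z - x"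
  shows "sparse d A"
  unfolding sparse_def
proof
  fix x
  let ?S = "A \<inter> {x..x+d}"
  show "card ?S \<le> 2"
  proof (rule ccontr)
    assume c: "\<not> card ?S \<le> 2"
    have fin: "finite ?S" by simp
    then have ne: "?S \<noteq> {}" using c by auto
    define m where "m = Min ?S"
    define M where "M = Max ?S"
    have mS: "m \<in> ?S" "M \<in> ?S" unfolding m_def M_def using Min_in[OF fin ne] Max_in[OF fin ne] by simp_all
    have "\<not> ?S \<subseteq> {m, M}"
    proof
      assume "?S \<subseteq> {m, M}"
      then have "card ?S \<le> card {m, M}" by (intro card_mono) auto
      also have "\<dots> \<le> 2" by (simp add: card_insert_le_m1)
      finally show False using c by simp
    qed
    then obtain y where y: "y \<in> ?S" "y \<noteq> m" "y \<noteq> M" by blast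
    have "m \<le> y" "y \<le> M" unfolding m_def M_def using fin y by auto
    then have "m < y" "y < M" using y by auto
    then have "d < M - m" using assms mS y by auto
    moreover have "M - m \<le> d" using mS by auto
    ultimately show False by simp
  qed
qed

lemma apx_bound:
  assumes "lo \<in> A" "lo \<le> b" "hi \<in> insert (t+1) A" "b \<le> hi" "hi \<le> lo + d"
  shows "apx_plus t b A - apx_minus t b A \<le> ereal (real d)"
proof -
  have "ereal (real lo) \<le> apx_minus t b A"
    unfolding apx_minus_def using assms by (intro Sup_upper) auto
  moreover have "apx_plus t b A \<le> ereal (real hi)"
    unfolding apx_plus_def using assms by (intro Inf_lower) auto
  ultimately have "apx_plus t b A - apx_minus t b A \<le> ereal (real hi) - ereal (real lo)"
    by (intro ereal_minus_mono)
  also have "\<dots> = ereal (real hi - real lo)" by simp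
  also have "\<dots> \<le> ereal (real d)" using assms by simp
  finally show ?thesis .
qed

theorem lemma4p7:
  "\<exists>c::nat. \<forall>(t::nat) (\<Delta>::nat) (B::nat list).
     sorted_wrt (<) B \<longrightarrow> set B \<subseteq> {0..t} \<longrightarrow>
       sparsely_approximates t \<Delta> (set (sparse_apx t \<Delta> B)) (set B) \<and>
       T_sparse_apx t \<Delta> B \<le> c * (length B + 1)"
proof (intro exI[of _ 1] allI impI conjI)
  fix t \<Delta> :: nat and B :: "nat list"
  assume s: "sorted_wrt (<) B" and sub: "set B \<subseteq> {0..t}"
  show "T_sparse_apx t \<Delta> B \<le> 1 * (length B + 1)"
    unfolding T_sparse_apx_def using scan_time by simp
  let ?A = "set (sparse_apx t \<Delta> B)"
  have sp: "sparse \<Delta> ?A"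
    using scan_sparse[OF s, of None t \<Delta>] unfolding sparse_apx_def
    by (intro triple_sparse) simp
  have sub': "set B \<subseteq> {..t}" using sub by auto
  have ap: "\<forall>b\<in>set B. \<exists>lo\<in>?A. lo \<le> b \<and> (\<exists>hi\<in>insert (t+1) ?A. b \<le> hi \<and> hi \<le> lo + \<Delta>)"
    using scan_apx[OF s _ sub', of None \<Delta>] unfolding sparse_apx_def by simp
  have "approximates t \<Delta> ?A (set B)"
    unfolding approximates_def
  proof (intro conjI ballI)
    show "?A \<subseteq> set B" unfolding sparse_apx_def by (rule scan_subset)
    show "set B \<subseteq> {0..t}" by (rule sub)
    fix b assume "b \<in> set B"
    then obtain lo hi where "lo \<in> ?A" "lo \<le> b" "hi \<in> insert (t+1) ?A" "b \<le> hi" "hi \<le> lo + \<Delta>"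
      using ap by blast
    then show "apx_plus t b ?A - apx_minus t b ?A \<le> ereal (real \<Delta>)" by (rule apx_bound)
  qed
  then show "sparsely_approximates t \<Delta> ?A (set B)"
    unfolding sparsely_approximates_def using sp by simp
qed

end
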